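(* Fix a notion of independence for which $N.X$ is defined for all random variables $X$ and all integers $N\ge 0$ (as in the context). Suppose $\{K_n\}_{n\ge1}$ is a family of generalized cumulants for this notion of independence, i.e. it satisfies (K1'), (K2) and (K3). Then for every $X$ and every $n\ge1$, $M_n(N.X)$ (as a function of $N\in\{0,1,2,\dots\}$) is given by a polynomial in $N$, and $K_n(X)$ equals the coefficient of $N$ in this polynomial. In particular, if $\{K_n\}$ and $\{K_n'\}$ are two families satisfying (K1'), (K2), (K3), then $K_n(X)=K_n'(X)$ for all $n$ and all $X$.
   Context: An algebraic probability space is a pair $(\mathcal{A},\varphi)$ with $\mathcal{A}$ a unital $*$-algebra over $\mathbb{C}$ and $\varphi$ a state ($\varphi$ linear, $\varphi(a^*a)\ge0$, $\varphi(1)=1$). For $X\in\mathcal{A}$ write $M_n(X)=\varphi(X^n)$. Fix a notion of independence of random variables (for example commutative, free, Boolean, or monotone independence, the latter with respect to the order of the variables). For an integer $N\ge1$, $N.X$ denotes $X^{(1)}+\cdots+X^{(N)}$, where $X^{(1)},\dots,X^{(N)}$ are independent (in the fixed sense, and in this order) random variables in some algebraic probability space, each identically distributed to $X$ in the sense of moments ($M_n(X^{(i)})=M_n(X)$ for all $n$); it is assumed that the moments of $N.X$ depend only on the moments of $X$. By convention $M_n(0.X)=\delta_{n0}$ and $K_n(0.X):=\delta_{n0}$. A family $\{K_n\}_{n\ge1}$ assigns to each random variable $X$ (in any algebraic probability space) numbers $K_n(X)$ depending only on the moments of $X$, and satisfies: (K1') $K_n(N.X)=N\,K_n(X)$ for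 all $n\ge1$ and all integers $N\ge 0$; (K2) $K_n(\lambda X)=\lambda^nK_n(X)$ for all $\lambda>0$ and $n\ge1$; (K3) for each $n$ there is a polynomial $Q_n$ in $n-1$ variables, independent of $X$, with $M_n(X)=K_n(X)+Q_n(K_1(X),\dots,K_{n-1}(X))$ for all $X$. *)

theory Defs
  imports Complex_Main "HOL-Computational_Algebra.Polynomial"
begin

text \<open>The type 'r stands for (a universe of) random variables.
  M X n is the n-th moment M_n(X) = phi(X^n); sc l X is the dilation l X (l > 0);
  dot N X is N.X, the sum of N independent (in the fixed sense) copies of X.\<close>

definition indep_structure ::
  "('r \<Rightarrow> nat \<Rightarrow> complex) \<Rightarrow> (real \<Rightarrow> 'r \<Rightarrow> 'r) \<Rightarrow> (nat \<Rightarrow> 'r \<Rightarrow> 'r) \<Rightarrow> bool" where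
  "indep_structure M sc dot \<longleftrightarrow>
     (\<forall>X. M X 0 = 1) \<and>
     (\<forall>l X n. l > 0 \<longrightarrow> M (sc l X) n = (complex_of_real l) ^ n * M X n) \<and>
     (\<forall>X n. M (dot 0 X) n = (if n = 0 then 1 else 0)) \<and>
     (\<forall>X. M (dot 1 X) = M X) \<and>
     (\<forall>N X Y. M X = M Y \<longrightarrow> M (dot N X) = M (dot N Y))"

definition poly_in_vars :: "nat \<Rightarrow> ((nat \<Rightarrow> complex) \<Rightarrow> complex) \<Rightarrow> bool" where
  "poly_in_vars n Q \<longleftrightarrow>
     (\<exists>S :: (nat \<Rightarrow> nat) set. \<exists>c :: (nat \<Rightarrow> nat) \<Rightarrow> complex. finite S \<and>
        (\<forall>k. Q k = (\<Sum>\<alpha>\<in>S. c \<alpha> * (\<Prod>j\<in>{1..<n}. k j ^ \<alpha> j))))"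

definition gen_cumulants ::
  "('r \<Rightarrow> nat \<Rightarrow> complex) \<Rightarrow> (real \<Rightarrow> 'r \<Rightarrow> 'r) \<Rightarrow> (nat \<Rightarrow> 'r \<Rightarrow> 'r)
     \<Rightarrow> (nat \<Rightarrow> 'r \<Rightarrow> complex) \<Rightarrow> bool" where
  "gen_cumulants M sc dot K \<longleftrightarrow>
     (\<forall>X Y n. M X = M Y \<longrightarrow> n \<ge> 1 \<longrightarrow> K n X = K n Y) \<and>
     (\<forall>n N X. n \<ge> 1 \<longrightarrow> K n (dot N X) = of_nat N * K n X) \<and>
     (\<forall>l n X. l > 0 \<longrightarrow> n \<ge> 1 \<longrightarrow> K n (sc l X) = (complex_of_real l) ^ n * K n X) \<and>
     (\<forall>n \<ge> 1. \<exists>Q. poly_in_vars n Q \<and> (\<forall>X. M X n = K n X + Q (\<lambda>j. K j X)))"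

end

theory Submission
  imports Defs
begin

lemma zero_poly_nat:
  fixes p :: "complex poly"
  assumes "\<And>m. poly p (of_nat (Suc m)) = 0"
  shows "p = 0"
proof (rule ccontr)
  assume "p \<noteq> 0"
  then have "finite {x. poly p x = 0}" by (rule poly_roots_finite)
  moreover have "range (\<lambda>m. (of_nat (Suc m) :: complex)) \<subseteq> {x. poly p x = 0}"
    using assms by auto
  ultimately have "finite (range (\<lambda>m. (of_nat (Suc m) :: complex)))" by (rule finite_subset[rotated])
  moreover have "inj (\<lambda>m. (of_nat (Suc m) :: complex))" by (auto simp: inj_def)
  ultimately show False using finite_imageD by fastforce
qed

lemma prod_scale:
  fixes c :: complex
  shows "(\<Prod>j\<in>A. (c * k j) ^ (\<alpha> j)) = c ^ (\<Sum>j\<in>A. \<alpha> j) * (\<Prod>j\<in>A. k j ^ \<alpha> j)"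
  by (simp add: power_mult_distrib prod.distrib power_sum)

lemma prod_scale2:
  fixes c l :: complex
  shows "(\<Prod>j\<in>A. (l ^ j * (c * k j)) ^ (\<alpha> j))
     = l ^ (\<Sum>j\<in>A. j * \<alpha> j) * (c ^ (\<Sum>j\<in>A. \<alpha> j) * (\<Prod>j\<in>A. k j ^ \<alpha> j))"
  by (simp add: power_mult_distrib prod.distrib power_sum power_mult)

lemma main_poly:
  fixes M :: "'r \<Rightarrow> nat \<Rightarrow> complex" and sc :: "real \<Rightarrow> 'r \<Rightarrow> 'r"
    and dot :: "nat \<Rightarrow> 'r \<Rightarrow> 'r" and K :: "nat \<Rightarrow> 'r \<Rightarrow> complex"
  assumes I: "indep_structure M sc dot"
    and G: "gen_cumulants M sc dot K"
    and n1: "n \<ge> 1"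
  shows "\<exists>p :: complex poly. (\<forall>N. M (dot N X) n = poly p (of_nat N)) \<and> coeff p 1 = K n X"
proof -
  have Msc: "\<And>l Y m. l > 0 \<Longrightarrow> M (sc l Y) m = (complex_of_real l) ^ m * M Y m"
    using I unfolding indep_structure_def by blast
  have Kdot: "\<And>m N Y. m \<ge> 1 \<Longrightarrow> K m (dot N Y) = of_nat N * K m Y"
    using G unfolding gen_cumulants_def by blast
  have Ksc: "\<And>l m Y. l > 0 \<Longrightarrow> m \<ge> 1 \<Longrightarrow> K m (sc l Y) = (complex_of_real l) ^ m * K m Y"
    using G unfolding gen_cumulants_def by blast
  obtain Q where Qp: "poly_in_vars n Q" and QM: "\<And>Y. M Y n = K n Y + Q (\<lambda>j. K j Y)"
    using G n1 unfolding gen_cumulants_def by blast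
  obtain S and c :: "(nat \<Rightarrow> nat) \<Rightarrow> complex" where fS: "finite S"
    and Qd: "\<And>k. Q k = (\<Sum>\<alpha>\<in>S. c \<alpha> * (\<Prod>j\<in>{1..<n}. k j ^ \<alpha> j))"
    using Qp unfolding poly_in_vars_def by blast
  define k where "k = (\<lambda>j. K j X)"
  define a where "a = (\<lambda>\<alpha>. c \<alpha> * (\<Prod>j\<in>{1..<n}. k j ^ \<alpha> j))"
  define d where "d = (\<lambda>\<alpha>::nat\<Rightarrow>nat. \<Sum>j\<in>{1..<n}. \<alpha> j)"
  define w where "w = (\<lambda>\<alpha>::nat\<Rightarrow>nat. \<Sum>j\<in>{1..<n}. j * \<alpha> j)"
  have QN: "Q (\<lambda>j. K j (dot N X)) = (\<Sum>\<alpha>\<in>S. a \<alpha> * of_nat N ^ d \<alpha>)" for N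
  proof -
    have "Q (\<lambda>j. K j (dot N X)) = (\<Sum>\<alpha>\<in>S. c \<alpha> * (\<Prod>j\<in>{1..<n}. (of_nat N * k j) ^ \<alpha> j))"
      unfolding Qd k_def
      by (intro sum.cong refl arg_cong2[where f="(*)"] prod.cong) (auto simp: Kdot)
    also have "\<dots> = (\<Sum>\<alpha>\<in>S. a \<alpha> * of_nat N ^ d \<alpha>)"
      unfolding prod_scale a_def d_def by (simp add: mult_ac)
    finally show ?thesis .
  qed
  have QlN: "Q (\<lambda>j. K j (sc r (dot N X))) = (\<Sum>\<alpha>\<in>S. a \<alpha> * (complex_of_real r) ^ w \<alpha> * of_nat N ^ d \<alpha>)"
    if r: "r > 0" for N r
  proof -
    have "Q (\<lambda>j. K j (sc r (dot N X))) = (\<Sum>\<alpha>\<in>S. c \<alpha> * (\<Prod>j\<in>{1..<n}. ((complex_of_real r) ^ j * (of_nat N * k j)) ^ \<alpha> j))"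
      unfolding Qd k_def
      by (intro sum.cong refl arg_cong2[where f="(*)"] prod.cong) (auto simp: Kdot Ksc r)
    also have "\<dots> = (\<Sum>\<alpha>\<in>S. a \<alpha> * (complex_of_real r) ^ w \<alpha> * of_nat N ^ d \<alpha>)"
      unfolding prod_scale2 a_def d_def w_def by (simp add: mult_ac)
    finally show ?thesis .
  qed
  define L where "L = (\<Sum>\<alpha>\<in>S. if d \<alpha> = 1 then a \<alpha> else 0)"
  define P where "P = monom (K n X) 1 + (\<Sum>\<alpha>\<in>S. monom (a \<alpha>) (d \<alpha>))"
  have PM: "M (dot N X) n = poly P (of_nat N)" for N
    unfolding P_def QM using Kdot[OF n1, of N X] by (simp add: poly_sum poly_monom QN mult_ac)
  have cP: "coeff P 1 = K n X + L"
    unfolding P_def L_def by (simp add: coeff_sum coeff_monom)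
  have wd: "w \<alpha> < n" if "d \<alpha> = 1" for \<alpha>
  proof -
    have "w \<alpha> \<le> (\<Sum>j\<in>{1..<n}. (n - 1) * \<alpha> j)"
      unfolding w_def by (intro sum_mono) auto
    also have "\<dots> = (n - 1) * d \<alpha>" unfolding d_def by (simp add: sum_distrib_left)
    finally show ?thesis using that n1 by simp
  qed
  have coef1: "(complex_of_real r) ^ n * L = (\<Sum>\<alpha>\<in>S. if d \<alpha> = 1 then a \<alpha> * (complex_of_real r) ^ w \<alpha> else 0)"
    if r: "r > 0" for r
  proof -
    define l where "l = complex_of_real r"
    define P1 where "P1 = (\<Sum>\<alpha>\<in>S. monom (l ^ n * a \<alpha>) (d \<alpha>))"
    define P2 where "P2 = (\<Sum>\<alpha>\<in>S. monom (a \<alpha> * l ^ w \<alpha>) (d \<alpha>))"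
    have "poly (P1 - P2) (of_nat N) = 0" for N
    proof -
      have "Q (\<lambda>j. K j (sc r (dot N X))) = l ^ n * Q (\<lambda>j. K j (dot N X))"
      proof -
        have "Q (\<lambda>j. K j (sc r (dot N X))) = M (sc r (dot N X)) n - K n (sc r (dot N X))"
          using QM[of "sc r (dot N X)"] by simp
        also have "\<dots> = l ^ n * (M (dot N X) n - K n (dot N X))"
          using Msc[OF r, of "dot N X" n] Ksc[OF r n1, of "dot N X"] by (simp add: l_def right_diff_distrib)
        also have "\<dots> = l ^ n * Q (\<lambda>j. K j (dot N X))" using QM[of "dot N X"] by simp
        finally show ?thesis .
      qed
      then have "(\<Sum>\<alpha>\<in>S. a \<alpha> * l ^ w \<alpha> * of_nat N ^ d \<alpha>) = l ^ n * (\<Sum>\<alpha>\<in>S. a \<alpha> * of_nat N ^ d \<alpha>)"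
        unfolding QN QlN[OF r] l_def .
      then show ?thesis
        unfolding P1_def P2_def by (simp add: poly_sum poly_monom sum_distrib_left mult_ac)
    qed
    then have "P1 - P2 = 0" by (intro zero_poly_nat) blast
    then have "coeff P1 1 = coeff P2 1" by simp
    then show ?thesis
      unfolding P1_def P2_def L_def l_def
      by (simp add: coeff_sum coeff_monom sum_distrib_left if_distrib cong: if_cong)
  qed
  have L0: "L = 0"
  proof -
    define R where "R = (\<Sum>\<alpha>\<in>S. monom (if d \<alpha> = 1 then a \<alpha> else 0) (w \<alpha>)) - monom L n"
    have "poly R (of_nat (Suc m)) = 0" for m
    proof -
      have r: "real (Suc m) > 0" by simp
      have e: "complex_of_real (real (Suc m)) = of_nat (Suc m)" by simp
      have "poly (\<Sum>\<alpha>\<in>S. monom (if d \<alpha> = 1 then a \<alpha> else 0) (w \<alpha>)) (of_nat (Suc m))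
          = (\<Sum>\<alpha>\<in>S. if d \<alpha> = 1 then a \<alpha> * (of_nat (Suc m)) ^ w \<alpha> else 0)"
        by (simp only: poly_sum poly_monom) (intro sum.cong refl, simp)
      then show ?thesis using coef1[OF r] unfolding R_def e
        by (simp add: poly_monom mult_ac)
    qed
    then have "R = 0" by (rule zero_poly_nat)
    then have "coeff R n = 0" by simp
    moreover have "coeff (\<Sum>\<alpha>\<in>S. monom (if d \<alpha> = 1 then a \<alpha> else 0) (w \<alpha>)) n = 0"
      unfolding coeff_sum
    proof (intro sum.neutral ballI)
      fix \<alpha> show "coeff (monom (if d \<alpha> = 1 then a \<alpha> else 0) (w \<alpha>)) n = 0"
        using wd[of \<alpha>] by (cases "d \<alpha> = 1") (auto simp: coeff_monom)
    qed
    ultimately show ?thesis unfolding R_def by simp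
  qed
  show ?thesis using PM cP L0 by auto
qed

theorem mainTheorem1:
  fixes M :: "'r \<Rightarrow> nat \<Rightarrow> complex" and sc :: "real \<Rightarrow> 'r \<Rightarrow> 'r"
    and dot :: "nat \<Rightarrow> 'r \<Rightarrow> 'r" and K :: "nat \<Rightarrow> 'r \<Rightarrow> complex"
  assumes "indep_structure M sc dot"
    and "gen_cumulants M sc dot K"
  shows "(\<forall>X n. n \<ge> 1 \<longrightarrow>
            (\<exists>p :: complex poly. (\<forall>N. M (dot N X) n = poly p (of_nat N)) \<and> coeff p 1 = K n X))
       \<and> (\<forall>K'. gen_cumulants M sc dot K' \<longrightarrow> (\<forall>n X. n \<ge> 1 \<longrightarrow> K n X = K' n X))"
proof (intro conjI allI impI)
  fix X n assume "(n::nat) \<ge> 1"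
  then show "\<exists>p :: complex poly. (\<forall>N. M (dot N X) n = poly p (of_nat N)) \<and> coeff p 1 = K n X"
    using main_poly[OF assms] by blast
next
  fix K' n X assume G': "gen_cumulants M sc dot K'" and n1: "(n::nat) \<ge> 1"
  obtain p where p: "\<forall>N. M (dot N X) n = poly p (of_nat N)" "coeff p 1 = K n X"
    using main_poly[OF assms n1] by blast
  obtain p' where p': "\<forall>N. M (dot N X) n = poly p' (of_nat N)" "coeff p' 1 = K' n X"
    using main_poly[OF assms(1) G' n1] by blast
  have "p - p' = 0"
  proof (rule zero_poly_nat)
    fix m show "poly (p - p') (of_nat (Suc m)) = 0"
      using p(1) p'(1) by (metis diff_self poly_diff)
  qed
  then show "K n X = K' n X" using p p' by simp
qed

end
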